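(* Let $k\ge\ell\ge1$ be integers with $k+\ell\ge6$, and let $G$ be a finite digraph with $s(v)\ge\mathrm{OPT}(k,\ell)$ for every $v\in V(G)$ and with $X\ne\emptyset$. Then $$D\ge\left(1-\frac{1}{m^3}\right)\frac{m}{m+1}.$$
   Context: Put $m=k+\ell$. Digraphs are finite, without loops; $xy$ denotes an arc from $x$ to $y$; two vertices are adjacent if at least one of $xy,yx$ is an arc. The oriented star $S_{k,\ell}$ has a center $c$, a set $O$ of $k$ out-leaves and a set $I$ of $\ell$ in-leaves; its arcs are exactly $co$ ($o\in O$) and $ic$ ($i\in I$). For a digraph $G$ on $n$ vertices, let $\phi$ be a uniformly random map from $V(S_{k,\ell})$ to $V(G)$ (all $n^{m+1}$ maps equally likely), and let $\mathcal S$ be the set of maps $\phi$ that are isomorphisms from $S_{k,\ell}$ onto $G[\mathrm{Im}\,\phi]$ (in particular injective); $s(v)=\Pr[\phi\in\mathcal S\mid v\in\mathrm{Im}\,\phi]$. $\rho(v)$ is the number of vertices adjacent to $v$ divided by $n$. $X=\{v\in V(G):\rho(v)\ge1/2\}$ and $D=\min_{x\in X}\rho(x)$. $\mathrm{OPT}(k,\ell)=2^{-2k}\max_{\alpha\in[0,1]}\{\alpha(1-\alpha)^{2k}+(1-\alpha)\alpha^{2k}\}$ if $k=\ell$, and, if $k>\ell$, $\mathrm{OPT}(k,\ell)=\max_{(\alpha,d)\in[0,\frac12]\times[0,\frac{k}{k+\ell}]}\{\alpha(1-\alpha)^{m}d^k(1-d)^\ell+\frac{(k-1)^{k-1}\ell^\ell}{(m-1)^{m-1}}(1-\alpha)\alpha^{m}(1-d)\}$.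 *)

theory Defs
  imports Complex_Main "HOL-Library.FuncSet"
begin

definition digraph :: "'a set \<Rightarrow> ('a \<Rightarrow> 'a \<Rightarrow> bool) \<Rightarrow> bool" where
  "digraph V A \<longleftrightarrow> finite V \<and> (\<forall>x y. A x y \<longrightarrow> x \<in> V \<and> y \<in> V) \<and> (\<forall>x. \<not> A x x)"

text \<open>The oriented star S_{k,l} on vertex set {0..k+l}: 0 is the centre,
  1..k are the out-leaves, k+1..k+l are the in-leaves.\<close>
definition star_arc :: "nat \<Rightarrow> nat \<Rightarrow> nat \<Rightarrow> nat \<Rightarrow> bool" where
  "star_arc k l a b \<longleftrightarrow> (a = 0 \<and> 1 \<le> b \<and> b \<le> k) \<or> (b = 0 \<and> k + 1 \<le> a \<and> a \<le> k + l)"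

definition all_maps :: "nat \<Rightarrow> nat \<Rightarrow> 'a set \<Rightarrow> (nat \<Rightarrow> 'a) set" where
  "all_maps k l V = PiE {0..k+l} (\<lambda>_. V)"

definition star_maps :: "nat \<Rightarrow> nat \<Rightarrow> 'a set \<Rightarrow> ('a \<Rightarrow> 'a \<Rightarrow> bool) \<Rightarrow> (nat \<Rightarrow> 'a) set" where
  "star_maps k l V A = {\<phi> \<in> all_maps k l V. inj_on \<phi> {0..k+l} \<and>
      (\<forall>a\<in>{0..k+l}. \<forall>b\<in>{0..k+l}. A (\<phi> a) (\<phi> b) \<longleftrightarrow> star_arc k l a b)}"

text \<open>s(v) = Pr[phi in S | v in Im phi] for uniformly random phi.\<close>
definition s_val :: "nat \<Rightarrow> nat \<Rightarrow> 'a set \<Rightarrow> ('a \<Rightarrow> 'a \<Rightarrow> bool) \<Rightarrow> 'a \<Rightarrow> real" where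
  "s_val k l V A v =
     real (card {\<phi> \<in> star_maps k l V A. v \<in> \<phi> ` {0..k+l}}) /
     real (card {\<phi> \<in> all_maps k l V. v \<in> \<phi> ` {0..k+l}})"

definition rho :: "'a set \<Rightarrow> ('a \<Rightarrow> 'a \<Rightarrow> bool) \<Rightarrow> 'a \<Rightarrow> real" where
  "rho V A v = real (card {u \<in> V. A u v \<or> A v u}) / real (card V)"

definition Xset :: "'a set \<Rightarrow> ('a \<Rightarrow> 'a \<Rightarrow> bool) \<Rightarrow> 'a set" where
  "Xset V A = {v \<in> V. rho V A v \<ge> 1/2}"

definition Dval :: "'a set \<Rightarrow> ('a \<Rightarrow> 'a \<Rightarrow> bool) \<Rightarrow> real" where
  "Dval V A = Min (rho V A ` Xset V A)"

text \<open>OPT(k,l) (defined for k \<ge> l; maxima written as suprema over compact sets).\<close>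
definition OPT :: "nat \<Rightarrow> nat \<Rightarrow> real" where
  "OPT k l = (let m = k + l in
     if k = l then
       (1 / 2 ^ (2*k)) * Sup ((\<lambda>\<alpha>::real. \<alpha> * (1-\<alpha>)^(2*k) + (1-\<alpha>) * \<alpha>^(2*k)) ` {0..1})
     else
       Sup ((\<lambda>(\<alpha>::real, d::real). \<alpha> * (1-\<alpha>)^m * d^k * (1-d)^l
             + (real (k-1) ^ (k-1) * real l ^ l / real (m-1) ^ (m-1)) * (1-\<alpha>) * \<alpha>^m * (1-d))
           ` ({0..1/2} \<times> {0..real k / real m})))"

end

theory Submission
  imports Defs "HOL-Analysis.Analysis"
begin


lemma piece:
  fixes a b w u B K Kb :: real
  assumes "a \<le> w" "w \<le> b" "w \<le> 1" "0 \<le> u" "u \<le> B" "0 \<le> K" "K \<le> Kb" "0 \<le> a"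
  shows "u^m + K*w*(1-w)^(m-1) \<le> B^m + Kb*b*(1-a)^(m-1)"
proof -
  have "u^m \<le> B^m" using assms by (intro power_mono) auto
  moreover have "(1-w)^(m-1) \<le> (1-a)^(m-1)" using assms by (intro power_mono) auto
  hence "K*w*(1-w)^(m-1) \<le> Kb*b*(1-a)^(m-1)" using assms
    by (intro mult_mono) auto
  ultimately show ?thesis by linarith
qed

lemma one_minus_pow_le: fixes x :: real assumes "0 \<le> x" "x \<le> 1"
  shows "(1-x)^n \<le> 1/(1 + real n * x)"
proof -
  have "(1-x)^n * (1+x)^n = (1-x^2)^n" by (simp add: power_mult_distrib[symmetric] algebra_simps power2_eq_square)
  also have "\<dots> \<le> 1" using assms by (intro power_le_one) (auto simp: power2_eq_square mult_le_one)
  finally have 1: "(1-x)^n * (1+x)^n \<le> 1" .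
  have 2: "1 + real n * x \<le> (1+x)^n" using Bernoulli_inequality[of x n] assms by simp
  have p: "0 < 1 + real n * x" using assms by (simp add: add_pos_nonneg)
  have "(1-x)^n * (1 + real n * x) \<le> (1-x)^n * (1+x)^n"
    using 2 assms by (intro mult_left_mono) auto
  with 1 have "(1-x)^n * (1 + real n * x) \<le> 1" by linarith
  thus ?thesis using p by (simp add: field_simps)
qed

lemma e_bound: fixes j :: nat assumes "j > 0" shows "(1 + 1/real j)^j \<le> exp 1"
proof -
  have "(1 + 1/real j)^j \<le> exp (1/real j)^j"
    by (intro power_mono exp_ge_add_one_self) auto
  also have "\<dots> = exp (real j * (1/real j))" by (simp only: exp_of_nat_mult)
  also have "\<dots> = exp 1" using assms by simp
  finally show ?thesis .
qed

lemma piece_lt: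
  fixes a b w u B K Kb Q :: real
  assumes "a \<le> w" "w \<le> b" "w \<le> 1" "0 \<le> u" "u \<le> B" "0 \<le> K" "K \<le> Kb" "0 \<le> a"
    "B^m + Kb*b*(1-a)^(m-1) < Q"
  shows "u^m + K*w*(1-w)^(m-1) < Q"
  using piece[OF assms(1-8), of m] assms(9) by linarith

lemma nat_ind9: "m \<ge> 9 \<Longrightarrow> 512 * m \<le> 9 * 2^m"
proof (induction m rule: dec_induct)
  case base then show ?case by simp
next
  case (step n) then show ?case by simp
qed

lemma nat_ind9b: "m \<ge> 9 \<Longrightarrow> m*(m^2+1)*100 \<le> 5^(m-1)"
proof (induction m rule: dec_induct)
  case base then show ?case by simp
next
  case (step n)
  have "Suc n * ((Suc n)^2+1) * 100 \<le> 5 * (n*(n^2+1)*100)"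
  proof -
    have e1: "Suc n * ((Suc n)^2+1) = n^3 + 3*n^2 + 4*n + 2" by (simp add: power2_eq_square power3_eq_cube algebra_simps)
    have e2: "n*(n^2+1) = n^3 + n" by (simp add: power2_eq_square power3_eq_cube algebra_simps)
    have h1: "n^2 \<le> n^3" using step(1) by (simp add: power_increasing)
    have h2: "2 \<le> n^3" using step(1) self_le_power[of n 3] by linarith
    show ?thesis unfolding e1 mult.assoc[symmetric] using h1 h2 e2 by simp
  qed
  also have "\<dots> \<le> 5 * 5^(n-1)" using step(3) by simp
  also have "\<dots> = 5^(Suc n - 1)" using step(1) by (cases n) auto
  finally show ?case .
qed

lemma analytic_big:
  fixes m :: nat and K u w :: real
  assumes m9: "m \<ge> 9" and K0: "0 \<le> K" and Kb: "K \<le> 16/10 * real m ^ m / real (m-1)^(m-1)"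
    and w1: "1/2 \<le> w" and w2: "w \<le> 1" and u0: "0 \<le> u" and uw: "u \<le> w"
    and uT: "u < (1 - 1/real m^3) * (real m/(real m+1))"
  shows "u^m + K*w*(1-w)^(m-1) < (real m/(real m+1))^m"
proof -
  define q where "q = real m/(real m+1)"
  have mpos: "real m > 0" using m9 by simp
  have e272: "exp 1 < (272/100::real)" by (rule e_less_272)
  have "q^m = 1/(1 + 1/real m)^m" unfolding q_def using mpos
    by (simp add: power_divide field_simps)
  moreover have "(1 + 1/real m)^m \<le> exp 1" using e_bound[of m] m9 by simp
  moreover have "(1 + 1/real m)^m > 0" using mpos by (simp add: add_pos_nonneg)
  ultimately have "q^m \<ge> 1/exp 1" by (simp add: frac_le)
  moreover have "1/exp 1 > (100/272::real)" using e272 by (simp add: field_simps)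
  ultimately have Qlow: "q^m > 100/272" by linarith
  have mm1: "real (m-1) > 0" using m9 by simp
  have "real m ^ m / real (m-1)^(m-1) = real m * (real m / real (m-1))^(m-1)"
    using m9 by (cases m) (auto simp: power_divide)
  also have "real m / real (m-1) = 1 + 1/real (m-1)" using mm1 m9 by (simp add: field_simps of_nat_diff)
  also have "(1 + 1/real (m-1))^(m-1) \<le> exp 1" using e_bound[of "m-1"] m9 by simp
  hence "real m * (1 + 1/real (m-1))^(m-1) \<le> real m * (272/100)" using e272 mpos by simp
  finally have "real m ^ m / real (m-1)^(m-1) \<le> real m * (272/100)" by simp
  hence Kle: "K \<le> 16/10 * (272/100) * real m" using Kb by linarith
  have p1: "(4/5::real)^m \<le> (4/5)^9" using m9 by (intro power_decreasing) auto
  have "real (512 * m) \<le> real (9 * 2^m)" using nat_ind9[OF m9] by linarith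
  hence p2: "real m / 2^m \<le> 9/512" by (simp add: field_simps)
  have "real (m*(m^2+1)*100) \<le> real (5^(m-1))" using nat_ind9b[OF m9] by linarith
  hence p3: "real m*(real m^2+1)*100 \<le> 5^(m-1)" by (simp add: algebra_simps)
  show ?thesis
  proof (cases "w \<le> 4/5")
    case True
    have "(1/2::real)^(m-1) = 2 / 2^m" using m9 by (cases m) (auto simp: power_divide)
    hence "K * (4/5) * (1 - 1/2)^(m-1) \<le> 16/10 * (272/100) * real m * (4/5) * (2/2^m)" using Kle K0
      by (intro mult_mono) auto
    also have "\<dots> = 16/10 * (272/100) * (4/5) * 2 * (real m / 2^m)" by simp
    also have "\<dots> \<le> 16/10 * (272/100) * (4/5) * 2 * (9/512)" using p2 by (intro mult_left_mono) auto
    finally have "(4/5)^m + K * (4/5) * (1 - 1/2)^(m-1) < q^m" using p1 Qlow by (simp add: power_divide) 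
    then show ?thesis unfolding q_def
      by (intro piece_lt[of "1/2" w "4/5" u "4/5" K K]) (use True w1 w2 u0 uw K0 in auto)
  next
    case False
    define T where "T = (1 - 1/real m^3) * q"
    have pm: "real m^2 + 1 \<noteq> 0" by (smt (verit) zero_le_power2)
    have x0: "0 \<le> 1/real m^3" "1/real m^3 \<le> 1" using m9 by auto
    have "(1 - 1/real m^3)^m \<le> 1/(1 + real m * (1/real m^3))" by (rule one_minus_pow_le[OF x0])
    also have "1 + real m * (1/real m^3) = (real m^2+1)/real m^2" using mpos
      by (simp add: field_simps power2_eq_square power3_eq_cube)
    finally have "(1 - 1/real m^3)^m \<le> real m^2/(real m^2+1)" by simp
    hence "T^m \<le> q^m * (real m^2/(real m^2+1))" unfolding T_def power_mult_distrib
      using q_def mpos by (subst mult.commute) (intro mult_right_mono, auto)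
    also have "\<dots> = q^m - q^m/(real m^2+1)" using pm by (simp add: field_simps)
    finally have Tm: "T^m \<le> q^m - q^m/(real m^2+1)" .
    have "(1 - 4/5::real)^(m-1) = 1/5^(m-1)" by (simp add: power_divide)
    hence "K * 1 * (1-4/5)^(m-1) = K / 5^(m-1)" by simp
    also have "\<dots> \<le> 16/10 * (272/100) * real m / 5^(m-1)" using Kle
      by (intro divide_right_mono) auto
    also have "\<dots> \<le> 16/10 * (272/100) * real m / (real m*(real m^2+1)*100)"
      using p3 mpos by (intro divide_left_mono) (auto intro!: mult_pos_pos add_pos_nonneg)
    also have "\<dots> = (real m * (16/10*(272/100))) / (real m * ((real m^2+1)*100))" by (simp add: mult_ac)
    also have "\<dots> = (16/10*(272/100)) / ((real m^2+1)*100)" using mpos by (intro mult_divide_mult_cancel_left) auto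
    also have "\<dots> = (16/10 * (272/100)/100) / (real m^2+1)" by (metis divide_divide_eq_left mult.commute)
    also have "\<dots> < q^m / (real m^2+1)" using Qlow by (intro divide_strict_right_mono) (auto intro: add_nonneg_pos)
    finally have "T^m + K * 1 * (1 - 4/5)^(m-1) < q^m" using Tm by linarith
    then show ?thesis unfolding q_def
      by (intro piece_lt[of "4/5" w 1 u T K K]) (use False w1 w2 u0 uw uT K0 in \<open>auto simp: T_def q_def\<close>)
  qed
qed

lemma analytic6:
  fixes K u w :: real
  assumes K0: "0 \<le> K" and Kb: "K \<le> 16/10*6^6/5^5" and w1: "1/2 \<le> w" and w2: "w \<le> 1"
    and u0: "0 \<le> u" and uw: "u \<le> w" and uT: "u < (1-1/6^3)*(6/7)"
  shows "u^6 + K*w*(1-w)^(6-1) < (6/7)^6"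
proof -
  have c0: "1/2 \<le> w \<Longrightarrow> w \<le> 101/200 \<Longrightarrow> ?thesis"
    by (rule piece_lt[of "1/2" w "101/200" u "101/200" K "16/10*6^6/5^5"]) (use K0 Kb w1 w2 u0 uw uT in \<open>auto simp: power_divide power_mult_distrib\<close>)
  have c1: "101/200 \<le> w \<Longrightarrow> w \<le> 21/40 \<Longrightarrow> ?thesis"
    by (rule piece_lt[of "101/200" w "21/40" u "21/40" K "16/10*6^6/5^5"]) (use K0 Kb w1 w2 u0 uw uT in \<open>auto simp: power_divide power_mult_distrib\<close>)
  have c2: "21/40 \<le> w \<Longrightarrow> w \<le> 3/5 \<Longrightarrow> ?thesis"
    by (rule piece_lt[of "21/40" w "3/5" u "3/5" K "16/10*6^6/5^5"]) (use K0 Kb w1 w2 u0 uw uT in \<open>auto simp: power_divide power_mult_distrib\<close>)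
  have c3: "3/5 \<le> w \<Longrightarrow> w \<le> 153/200 \<Longrightarrow> ?thesis"
    by (rule piece_lt[of "3/5" w "153/200" u "153/200" K "16/10*6^6/5^5"]) (use K0 Kb w1 w2 u0 uw uT in \<open>auto simp: power_divide power_mult_distrib\<close>)
  have c4: "153/200 \<le> w \<Longrightarrow> w \<le> 17/20 \<Longrightarrow> ?thesis"
    by (rule piece_lt[of "153/200" w "17/20" u "17/20" K "16/10*6^6/5^5"]) (use K0 Kb w1 w2 u0 uw uT in \<open>auto simp: power_divide power_mult_distrib\<close>)
  have c5: "17/20 \<le> w \<Longrightarrow> w \<le> 1 \<Longrightarrow> ?thesis"
    by (rule piece_lt[of "17/20" w "1" u "(1-1/6^3)*(6/7)" K "16/10*6^6/5^5"]) (use K0 Kb w1 w2 u0 uw uT in \<open>auto simp: power_divide power_mult_distrib\<close>)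
  show ?thesis using c0 c1 c2 c3 c4 c5 w1 w2 by linarith
qed

lemma analytic7:
  fixes K u w :: real
  assumes K0: "0 \<le> K" and Kb: "K \<le> 16/10*7^7/6^6" and w1: "1/2 \<le> w" and w2: "w \<le> 1"
    and u0: "0 \<le> u" and uw: "u \<le> w" and uT: "u < (1-1/7^3)*(7/8)"
  shows "u^7 + K*w*(1-w)^(7-1) < (7/8)^7"
proof -
  have c0: "1/2 \<le> w \<Longrightarrow> w \<le> 7/10 \<Longrightarrow> ?thesis"
    by (rule piece_lt[of "1/2" w "7/10" u "7/10" K "16/10*7^7/6^6"]) (use K0 Kb w1 w2 u0 uw uT in \<open>auto simp: power_divide power_mult_distrib\<close>)
  have c1: "7/10 \<le> w \<Longrightarrow> w \<le> 173/200 \<Longrightarrow> ?thesis"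
    by (rule piece_lt[of "7/10" w "173/200" u "173/200" K "16/10*7^7/6^6"]) (use K0 Kb w1 w2 u0 uw uT in \<open>auto simp: power_divide power_mult_distrib\<close>)
  have c2: "173/200 \<le> w \<Longrightarrow> w \<le> 1 \<Longrightarrow> ?thesis"
    by (rule piece_lt[of "173/200" w "1" u "(1-1/7^3)*(7/8)" K "16/10*7^7/6^6"]) (use K0 Kb w1 w2 u0 uw uT in \<open>auto simp: power_divide power_mult_distrib\<close>)
  show ?thesis using c0 c1 c2 w1 w2 by linarith
qed

lemma analytic8:
  fixes K u w :: real
  assumes K0: "0 \<le> K" and Kb: "K \<le> 16/10*8^8/7^7" and w1: "1/2 \<le> w" and w2: "w \<le> 1"
    and u0: "0 \<le> u" and uw: "u \<le> w" and uT: "u < (1-1/8^3)*(8/9)"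
  shows "u^8 + K*w*(1-w)^(8-1) < (8/9)^8"
proof -
  have c0: "1/2 \<le> w \<Longrightarrow> w \<le> 161/200 \<Longrightarrow> ?thesis"
    by (rule piece_lt[of "1/2" w "161/200" u "161/200" K "16/10*8^8/7^7"]) (use K0 Kb w1 w2 u0 uw uT in \<open>auto simp: power_divide power_mult_distrib\<close>)
  have c1: "161/200 \<le> w \<Longrightarrow> w \<le> 1 \<Longrightarrow> ?thesis"
    by (rule piece_lt[of "161/200" w "1" u "(1-1/8^3)*(8/9)" K "16/10*8^8/7^7"]) (use K0 Kb w1 w2 u0 uw uT in \<open>auto simp: power_divide power_mult_distrib\<close>)
  show ?thesis using c0 c1 w1 w2 by linarith
qed

lemma analytic:
  fixes m :: nat and K u w :: real
  assumes m6: "m \<ge> 6" and K0: "0 \<le> K" and Kb: "K \<le> 16/10 * real m ^ m / real (m-1)^(m-1)"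
    and w1: "1/2 \<le> w" and w2: "w \<le> 1" and u0: "0 \<le> u" and uw: "u \<le> w"
    and uT: "u < (1 - 1/real m^3) * (real m/(real m+1))"
  shows "u^m + K*w*(1-w)^(m-1) < (real m/(real m+1))^m"
proof -
  consider "m = 6" | "m = 7" | "m = 8" | "m \<ge> 9" using m6 by linarith
  then show ?thesis
  proof cases
    case 1 then show ?thesis using analytic6[OF K0 _ w1 w2 u0 uw] Kb uT by simp
  next
    case 2 then show ?thesis using analytic7[OF K0 _ w1 w2 u0 uw] Kb uT by simp
  next
    case 3 then show ?thesis using analytic8[OF K0 _ w1 w2 u0 uw] Kb uT by simp
  next
    case 4 then show ?thesis using analytic_big[OF _ K0 Kb w1 w2 u0 uw uT] by simp
  qed
qed



lemma split_prod:
  fixes f g :: "nat \<Rightarrow> real"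
  shows "(\<Prod>i<p+q. (if i < p then f i else g (i - p))) = (\<Prod>i<p. f i) * (\<Prod>j<q. g j)"
proof (induction q)
  case 0 then show ?case by simp
next
  case (Suc q) then show ?case by simp
qed

lemma split_sum:
  fixes f g :: "nat \<Rightarrow> real"
  shows "(\<Sum>i<p+q. (if i < p then f i else g (i - p))) = (\<Sum>i<p. f i) + (\<Sum>j<q. g j)"
proof (induction q)
  case 0 then show ?case by simp
next
  case (Suc q) then show ?case by simp
qed

lemma amgm_pow:
  fixes h :: "nat \<Rightarrow> real"
  assumes "N > 0" "\<And>i. i < N \<Longrightarrow> h i \<ge> 0"
  shows "(\<Prod>i<N. h i) \<le> ((\<Sum>i<N. h i)/N)^N"
proof -
  have am: "(\<Sum>i<N. h i / card {..<N}) \<ge> (\<Prod>i<N. h i) powr (1 / card {..<N})"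
    using assms by (intro arith_geom_mean) auto
  have P0: "(\<Prod>i<N. h i) \<ge> 0" using assms by (intro prod_nonneg) auto
  have S: "(\<Sum>i<N. h i / card {..<N}) = (\<Sum>i<N. h i)/N" by (simp add: sum_divide_distrib)
  show ?thesis
  proof (cases "(\<Prod>i<N. h i) = 0")
    case True
    have "(\<Sum>i<N. h i) \<ge> 0" using assms by (intro sum_nonneg) auto
    then show ?thesis using True by (simp only:) simp
  next
    case False
    hence Ppos: "(\<Prod>i<N. h i) > 0" using P0 by linarith
    have "(\<Prod>i<N. h i) = ((\<Prod>i<N. h i) powr (1/N))^N"
    proof -
      have "((\<Prod>i<N. h i) powr (1/N))^N = ((\<Prod>i<N. h i) powr (1/N)) powr (real N)"
      proof -
        have pp: "0 < (\<Prod>i<N. h i) powr (1/N)" unfolding powr_gt_zero using Ppos by linarith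
        show ?thesis by (rule powr_realpow[symmetric, OF pp])
      qed
      also have "\<dots> = (\<Prod>i<N. h i)" using assms(1) Ppos by (simp add: powr_powr)
      finally show ?thesis by simp
    qed
    also have "\<dots> \<le> ((\<Sum>i<N. h i)/N)^N"
      using am S by (intro power_mono) auto
    finally show ?thesis .
  qed
qed

lemma amgm2:
  fixes f g :: "nat \<Rightarrow> real"
  assumes "p + q > 0" "\<And>i. i < p \<Longrightarrow> f i \<ge> 0" "\<And>j. j < q \<Longrightarrow> g j \<ge> 0"
  shows "(\<Prod>i<p. f i) * (\<Prod>j<q. g j) \<le> (((\<Sum>i<p. f i) + (\<Sum>j<q. g j))/real (p+q))^(p+q)"
proof -
  define h where "h \<equiv> \<lambda>i. if i < p then f i else g (i - p)"
  have "(\<Prod>i<p+q. h i) \<le> ((\<Sum>i<p+q. h i)/real (p+q))^(p+q)"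
    using assms by (intro amgm_pow) (auto simp: h_def)
  thus ?thesis using split_prod[of p f g q] split_sum[of p f g q] unfolding h_def by simp
qed

lemma wamgm:
  fixes x y :: real and p q :: nat
  assumes "p + q > 0" "x \<ge> 0" "y \<ge> 0"
  shows "x^p * y^q \<le> (real p^p * real q^q / real (p+q)^(p+q)) * (x+y)^(p+q)"
proof -
  have 1: "(\<Prod>i<p. x/p) * (\<Prod>j<q. y/q) \<le> (((\<Sum>i<p. x/p) + (\<Sum>j<q. y/q))/real (p+q))^(p+q)"
    using assms by (intro amgm2) auto
  have s1: "(\<Sum>i<p. x/p) \<le> x" by (cases "p = 0") (use assms in auto)
  have s2: "(\<Sum>j<q. y/q) \<le> y" by (cases "q = 0") (use assms in auto)
  have "(((\<Sum>i<p. x/p) + (\<Sum>j<q. y/q))/real (p+q))^(p+q) \<le> ((x+y)/real (p+q))^(p+q)"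
    using s1 s2 assms by (intro power_mono divide_right_mono) (auto intro!: add_nonneg_nonneg sum_nonneg)
  with 1 have 2: "(x/p)^p * (y/q)^q \<le> ((x+y)/real (p+q))^(p+q)" by simp
  have ex: "x^p = real p^p * (x/p)^p" by (cases "p = 0") (auto simp: power_divide)
  have ey: "y^q = real q^q * (y/q)^q" by (cases "q = 0") (auto simp: power_divide)
  have "x^p * y^q = (real p^p * real q^q) * ((x/p)^p * (y/q)^q)" using ex ey by simp
  also have "\<dots> \<le> (real p^p * real q^q) * ((x+y)/real (p+q))^(p+q)"
    using 2 by (intro mult_left_mono) auto
  also have "\<dots> = (real p^p * real q^q / real (p+q)^(p+q)) * (x+y)^(p+q)"
    by (simp add: power_divide)
  finally show ?thesis .
qed

lemma sum_real_lessThan: "(\<Sum>i<k. real i) = real k * (real k - 1) / 2"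
  by (induction k) (auto simp: field_simps)

lemma centre_bound:
  fixes a b k l :: nat
  assumes "k > 0" "l > 0"
  shows "real ((\<Prod>i\<in>{0..<k}. a - i) * (\<Prod>j\<in>{0..<l}. b - j))
     \<le> (real k^k * real l^l / real (k+l)^(k+l)) * (max 0 (real a + real b - (real (k+l) - 2)/2))^(k+l)"
proof (cases "k \<le> a \<and> l \<le> b")
  case False
  then have z: "(\<Prod>i\<in>{0..<k}. a - i) * (\<Prod>j\<in>{0..<l}. b - j) = 0"
    by (auto simp: prod_zero_iff)
  have r: "0 \<le> (real k^k * real l^l / real (k+l)^(k+l)) * (max 0 (real a + real b - (real (k+l) - 2)/2))^(k+l)"
    by (intro mult_nonneg_nonneg divide_nonneg_nonneg zero_le_power) auto
  show ?thesis unfolding z using r by simp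
next
  case True
  have pa: "real (\<Prod>i\<in>{0..<k}. a - i) = real k^k * (\<Prod>i<k. (real a - real i)/k)"
  proof -
    have "real (\<Prod>i\<in>{0..<k}. a - i) = (\<Prod>i<k. real a - real i)"
      using True by (auto simp: of_nat_prod of_nat_diff lessThan_atLeast0 intro!: prod.cong)
    also have "\<dots> = (\<Prod>i<k. real k * ((real a - real i)/k))" using assms by simp
    also have "\<dots> = real k^k * (\<Prod>i<k. (real a - real i)/k)" by (subst prod.distrib) simp
    finally show ?thesis .
  qed
  have pb: "real (\<Prod>j\<in>{0..<l}. b - j) = real l^l * (\<Prod>j<l. (real b - real j)/l)"
  proof -
    have "real (\<Prod>j\<in>{0..<l}. b - j) = (\<Prod>j<l. real b - real j)"
      using True by (auto simp: of_nat_prod of_nat_diff lessThan_atLeast0 intro!: prod.cong)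
    also have "\<dots> = (\<Prod>j<l. real l * ((real b - real j)/l))" using assms by simp
    also have "\<dots> = real l^l * (\<Prod>j<l. (real b - real j)/l)" by (subst prod.distrib) simp
    finally show ?thesis .
  qed
  have am: "(\<Prod>i<k. (real a - real i)/k) * (\<Prod>j<l. (real b - real j)/l)
      \<le> (((\<Sum>i<k. (real a - real i)/k) + (\<Sum>j<l. (real b - real j)/l))/real (k+l))^(k+l)"
    using True assms by (intro amgm2) auto
  have sa: "(\<Sum>i<k. (real a - real i)/k) = real a - (real k - 1)/2"
    using assms by (simp add: sum_divide_distrib[symmetric] sum_subtractf sum_real_lessThan field_simps)
  have sb: "(\<Sum>j<l. (real b - real j)/l) = real b - (real l - 1)/2"
    using assms by (simp add: sum_divide_distrib[symmetric] sum_subtractf sum_real_lessThan field_simps)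
  have eq: "real a - (real k - 1)/2 + (real b - (real l - 1)/2) = real a + real b - (real (k+l) - 2)/2"
    by (simp add: field_simps)
  have nn: "real a + real b - (real (k+l) - 2)/2 \<ge> 0" using True by simp
  have "real ((\<Prod>i\<in>{0..<k}. a - i) * (\<Prod>j\<in>{0..<l}. b - j))
      = (real k^k * real l^l) * ((\<Prod>i<k. (real a - real i)/k) * (\<Prod>j<l. (real b - real j)/l))"
    using pa pb by (simp add: mult_ac)
  also have "\<dots> \<le> (real k^k * real l^l) * ((real a + real b - (real (k+l) - 2)/2)/real (k+l))^(k+l)"
    using am sa sb eq by (intro mult_left_mono) auto
  also have "\<dots> = (real k^k * real l^l / real (k+l)^(k+l)) * (max 0 (real a + real b - (real (k+l) - 2)/2))^(k+l)"
    using nn by (simp add: power_divide)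
  finally show ?thesis .
qed



definition nbr :: "'a set \<Rightarrow> ('a \<Rightarrow> 'a \<Rightarrow> bool) \<Rightarrow> 'a \<Rightarrow> 'a set" where
  "nbr V A x = {u\<in>V. A u x \<or> A x u}"
definition wset :: "'a set \<Rightarrow> ('a \<Rightarrow> 'a \<Rightarrow> bool) \<Rightarrow> 'a \<Rightarrow> 'a set" where
  "wset V A x = V - nbr V A x - {x}"
definition wo :: "'a set \<Rightarrow> ('a \<Rightarrow> 'a \<Rightarrow> bool) \<Rightarrow> 'a \<Rightarrow> 'a \<Rightarrow> 'a set" where
  "wo V A x y = {u \<in> wset V A x. A y u \<and> \<not> A u y}"
definition wi :: "'a set \<Rightarrow> ('a \<Rightarrow> 'a \<Rightarrow> bool) \<Rightarrow> 'a \<Rightarrow> 'a \<Rightarrow> 'a set" where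
  "wi V A x y = {u \<in> wset V A x. A u y \<and> \<not> A y u}"

definition leafF :: "nat \<Rightarrow> nat \<Rightarrow> 'a \<Rightarrow> 'a \<Rightarrow> 'a set \<Rightarrow> 'a set \<Rightarrow> nat \<Rightarrow> 'a set" where
  "leafF k j x y P Q i = (if i = 0 then {y} else if i = j then {x} else if i \<le> k then P else Q)"

lemma star_maps_D:
  assumes "\<phi> \<in> star_maps k l V A"
  shows "\<phi> \<in> PiE {0..k+l} (\<lambda>_. V)" "inj_on \<phi> {0..k+l}"
    "\<And>a b. a \<in> {0..k+l} \<Longrightarrow> b \<in> {0..k+l} \<Longrightarrow> A (\<phi> a) (\<phi> b) \<longleftrightarrow> star_arc k l a b"
  using assms unfolding star_maps_def all_maps_def by auto

lemma leaf_subset: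
  assumes j: "1 \<le> j" "j \<le> k+l"
  shows "{\<phi> \<in> star_maps k l V A. \<phi> j = x} \<subseteq>
     (\<Union>y\<in>nbr V A x. PiE {0..k+l} (leafF k j x y (wo V A x y) (wi V A x y)))"
proof
  fix \<phi> assume "\<phi> \<in> {\<phi> \<in> star_maps k l V A. \<phi> j = x}"
  then have sm: "\<phi> \<in> star_maps k l V A" and pj: "\<phi> j = x" by auto
  note D = star_maps_D[OF sm]
  define y where "y = \<phi> 0"
  have jin: "j \<in> {0..k+l}" using j by auto
  have y: "y \<in> nbr V A x"
  proof -
    have "y \<in> V" using D(1) unfolding y_def by (auto simp: PiE_iff)
    moreover have "A y x \<or> A x y"
    proof (cases "j \<le> k")
      case True
      then have "star_arc k l 0 j" using j by (simp add: star_arc_def)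
      then show ?thesis using D(3)[of 0 j] jin pj y_def by auto
    next
      case False
      then have "star_arc k l j 0" using j by (simp add: star_arc_def)
      then show ?thesis using D(3)[of j 0] jin pj y_def by auto
    qed
    ultimately show ?thesis unfolding nbr_def by auto
  qed
  have "\<phi> \<in> PiE {0..k+l} (leafF k j x y (wo V A x y) (wi V A x y))"
  proof (rule PiE_I)
    fix i assume i: "i \<in> {0..k+l}"
    show "\<phi> i \<in> leafF k j x y (wo V A x y) (wi V A x y) i"
    proof (cases "i = 0 \<or> i = j")
      case True then show ?thesis using pj y_def by (auto simp: leafF_def)
    next
      case False
      then have i0: "i \<noteq> 0" "i \<noteq> j" by auto
      have phV: "\<phi> i \<in> V" using D(1) i by (auto simp: PiE_iff)
      have nx: "\<phi> i \<noteq> x" using D(2) i jin i0 pj by (metis inj_on_contraD)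
      have n1: "\<not> A (\<phi> i) x" using D(3)[of i j] i jin i0 j pj by (auto simp: star_arc_def)
      have n2: "\<not> A x (\<phi> i)" using D(3)[of j i] i jin i0 j pj by (auto simp: star_arc_def)
      have w: "\<phi> i \<in> wset V A x" using phV nx n1 n2 unfolding wset_def nbr_def by auto
      have z: "0 \<in> {0..k+l}" by simp
      show ?thesis
      proof (cases "i \<le> k")
        case True
        have "A y (\<phi> i)" "\<not> A (\<phi> i) y" using D(3)[of 0 i] D(3)[of i 0] i z i0 True y_def
          by (auto simp: star_arc_def)
        then show ?thesis using w True i0 by (auto simp: leafF_def wo_def)
      next
        case False
        have "A (\<phi> i) y" "\<not> A y (\<phi> i)" using D(3)[of 0 i] D(3)[of i 0] i z i0 False y_def
          by (auto simp: star_arc_def)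
        then show ?thesis using w False i0 by (auto simp: leafF_def wi_def)
      qed
    qed
  next
    fix i assume "i \<notin> {0..k+l}"
    then show "\<phi> i = undefined" using D(1) by (auto simp: PiE_iff extensional_def)
  qed
  then show "\<phi> \<in> (\<Union>y\<in>nbr V A x. PiE {0..k+l} (leafF k j x y (wo V A x y) (wi V A x y)))"
    using y by blast
qed

lemma prod_leafF:
  assumes j: "1 \<le> j" "j \<le> k+l"
  shows "(\<Prod>i\<in>{0..k+l}. card (leafF k j x y P Q i)) =
    card P ^ (if j \<le> k then k-1 else k) * card Q ^ (if j \<le> k then l else l-1)"
proof -
  let ?g = "\<lambda>i. card (leafF k j x y P Q i)"
  have s0: "{0..k+l} = insert 0 {1..k+l}" by auto
  have "(\<Prod>i\<in>{0..k+l}. ?g i) = ?g 0 * (\<Prod>i\<in>{1..k+l}. ?g i)"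
    unfolding s0 by (subst prod.insert) auto
  also have "?g 0 = 1" by (simp add: leafF_def)
  also have "(\<Prod>i\<in>{1..k+l}. ?g i) = ?g j * (\<Prod>i\<in>{1..k+l}-{j}. ?g i)"
    using j by (intro prod.remove) auto
  also have "?g j = 1" using j by (simp add: leafF_def)
  also have "{1..k+l}-{j} = ({1..k}-{j}) \<union> ({k+1..k+l}-{j})" by auto
  also have "(\<Prod>i\<in>({1..k}-{j}) \<union> ({k+1..k+l}-{j}). ?g i) =
      (\<Prod>i\<in>{1..k}-{j}. ?g i) * (\<Prod>i\<in>{k+1..k+l}-{j}. ?g i)"
    by (intro prod.union_disjoint) auto
  also have "(\<Prod>i\<in>{1..k}-{j}. ?g i) = (\<Prod>i\<in>{1..k}-{j}. card P)"
    by (intro prod.cong) (auto simp: leafF_def)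
  also have "\<dots> = card P ^ card ({1..k}-{j})" by simp
  also have "(\<Prod>i\<in>{k+1..k+l}-{j}. ?g i) = (\<Prod>i\<in>{k+1..k+l}-{j}. card Q)"
    by (intro prod.cong) (auto simp: leafF_def)
  also have "\<dots> = card Q ^ card ({k+1..k+l}-{j})" by simp
  also have "card ({1..k}-{j}) = (if j \<le> k then k-1 else k)" using j by auto
  also have "card ({k+1..k+l}-{j}) = (if j \<le> k then l else l-1)" using j by auto
  finally show ?thesis by simp
qed

lemma wo_wi_card:
  assumes "finite V"
  shows "card (wo V A x y) + card (wi V A x y) \<le> card (wset V A x)"
proof -
  have f: "finite (wset V A x)" using assms by (simp add: wset_def)
  have "card (wo V A x y) + card (wi V A x y) = card (wo V A x y \<union> wi V A x y)"
    using f by (intro card_Un_disjoint[symmetric]) (auto simp: wo_def wi_def)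
  also have "\<dots> \<le> card (wset V A x)" using f by (intro card_mono) (auto simp: wo_def wi_def)
  finally show ?thesis .
qed

lemma leaf_card:
  assumes fin: "finite V" and j: "1 \<le> j" "j \<le> k+l"
    and p: "p = (if j \<le> k then k-1 else k)" and q: "q = (if j \<le> k then l else l-1)"
    and pq: "p + q > 0"
  shows "real (card {\<phi> \<in> star_maps k l V A. \<phi> j = x}) \<le>
     real (card (nbr V A x)) * (real p^p*real q^q/real(p+q)^(p+q)) * real (card (wset V A x))^(p+q)"
proof -
  let ?U = "\<lambda>y. PiE {0..k+l} (leafF k j x y (wo V A x y) (wi V A x y))"
  have finN: "finite (nbr V A x)" using fin by (simp add: nbr_def)
  have finU: "\<And>y. finite (?U y)"
    using fin by (intro finite_PiE) (auto simp: leafF_def wo_def wi_def wset_def)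
  have "card {\<phi> \<in> star_maps k l V A. \<phi> j = x} \<le> card (\<Union>y\<in>nbr V A x. ?U y)"
    using leaf_subset[OF j, of V A x] finN finU by (intro card_mono) auto
  also have "\<dots> \<le> (\<Sum>y\<in>nbr V A x. card (?U y))" using finN by (rule card_UN_le)
  also have "\<dots> = (\<Sum>y\<in>nbr V A x. card (wo V A x y) ^ p * card (wi V A x y) ^ q)"
    by (intro sum.cong refl) (simp add: card_PiE prod_leafF[OF j] p q)
  finally have 0: "card {\<phi> \<in> star_maps k l V A. \<phi> j = x} \<le> (\<Sum>y\<in>nbr V A x. card (wo V A x y) ^ p * card (wi V A x y) ^ q)" .
  have 1: "real (card {\<phi> \<in> star_maps k l V A. \<phi> j = x}) \<le>
      (\<Sum>y\<in>nbr V A x. real (card (wo V A x y)) ^ p * real (card (wi V A x y)) ^ q)"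
    using of_nat_mono[OF 0, where 'a=real] by simp
  note 1
  also have "(\<Sum>y\<in>nbr V A x. real (card (wo V A x y)) ^ p * real (card (wi V A x y)) ^ q) \<le> (\<Sum>y\<in>nbr V A x. (real p^p*real q^q/real(p+q)^(p+q)) * real (card (wset V A x))^(p+q))"
  proof (intro sum_mono)
    fix y
    have "real (card (wo V A x y)) ^ p * real (card (wi V A x y)) ^ q \<le>
        (real p^p*real q^q/real(p+q)^(p+q)) * (real (card (wo V A x y)) + real (card (wi V A x y)))^(p+q)"
      using pq by (intro wamgm) auto
    also have "\<dots> \<le> (real p^p*real q^q/real(p+q)^(p+q)) * real (card (wset V A x))^(p+q)"
      using wo_wi_card[OF fin, of A x y]
      by (intro mult_left_mono power_mono) (auto simp: of_nat_add[symmetric] simp del: of_nat_add)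
    finally show "real (card (wo V A x y)) ^ p * real (card (wi V A x y)) ^ q \<le>
        (real p^p*real q^q/real(p+q)^(p+q)) * real (card (wset V A x))^(p+q)" .
  qed
  also have "\<dots> = real (card (nbr V A x)) * (real p^p*real q^q/real(p+q)^(p+q)) * real (card (wset V A x))^(p+q)"
    by simp
  finally show ?thesis .
qed

lemma centre_card:
  assumes fin: "finite V" and kl: "k > 0" "l > 0"
  shows "real (card {\<phi> \<in> star_maps k l V A. \<phi> 0 = x}) \<le>
    (real k^k * real l^l / real (k+l)^(k+l)) * (max 0 (real (card (nbr V A x)) - (real (k+l) - 2)/2))^(k+l)"
proof -
  define Ou where "Ou = {u\<in>V. A x u \<and> \<not> A u x}"
  define Iu where "Iu = {u\<in>V. A u x \<and> \<not> A x u}"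
  define Z where "Z = {\<phi> \<in> star_maps k l V A. \<phi> 0 = x}"
  define R where "R = (\<lambda>\<phi>::nat\<Rightarrow>'a. (restrict \<phi> {1..k}, restrict \<phi> {k+1..k+l}))"
  define SO where "SO = {f \<in> {1..k} \<rightarrow>\<^sub>E Ou. inj_on f {1..k}}"
  define SI where "SI = {f \<in> {k+1..k+l} \<rightarrow>\<^sub>E Iu. inj_on f {k+1..k+l}}"
  have finO: "finite Ou" "finite Iu" using fin by (auto simp: Ou_def Iu_def)
  have inj: "inj_on R Z"
  proof (rule inj_onI)
    fix \<phi> \<psi> assume a: "\<phi> \<in> Z" "\<psi> \<in> Z" "R \<phi> = R \<psi>"
    have e1: "\<phi> \<in> PiE {0..k+l} (\<lambda>_. V)" "\<psi> \<in> PiE {0..k+l} (\<lambda>_. V)"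
      using a(1,2) star_maps_D(1) unfolding Z_def by blast+
    show "\<phi> = \<psi>"
    proof
      fix i
      show "\<phi> i = \<psi> i"
      proof (cases "i = 0")
        case True then show ?thesis using a unfolding Z_def by auto
      next
        case False
        show ?thesis
        proof (cases "i \<le> k")
          case True
          have "restrict \<phi> {1..k} i = restrict \<psi> {1..k} i" using a(3) unfolding R_def by simp
          then show ?thesis using True False by simp
        next
          case nk: False
          show ?thesis
          proof (cases "i \<le> k+l")
            case True
            have "restrict \<phi> {k+1..k+l} i = restrict \<psi> {k+1..k+l} i" using a(3) unfolding R_def by simp
            then show ?thesis using True nk by simp
          next
            case False
            then show ?thesis using e1 by (auto simp: PiE_iff extensional_def)
          qed
        qed
      qed
    qed
  qed
  have img: "R ` Z \<subseteq> SO \<times> SI"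
  proof
    fix r assume "r \<in> R ` Z"
    then obtain \<phi> where p: "\<phi> \<in> Z" and r: "r = R \<phi>" by auto
    have sm: "\<phi> \<in> star_maps k l V A" and p0: "\<phi> 0 = x" using p unfolding Z_def by auto
    note D = star_maps_D[OF sm]
    have z: "0 \<in> {0..k+l}" by simp
    have V: "\<And>i. i \<in> {0..k+l} \<Longrightarrow> \<phi> i \<in> V" using D(1) by (auto simp: PiE_iff)
    have "restrict \<phi> {1..k} \<in> SO"
      unfolding SO_def
    proof (intro CollectI conjI)
      show "restrict \<phi> {1..k} \<in> {1..k} \<rightarrow>\<^sub>E Ou"
      proof (rule restrict_PiE_iff[THEN iffD2], intro ballI)
        fix i assume i: "i \<in> {1..k}"
        then have "A x (\<phi> i)" "\<not> A (\<phi> i) x" using D(3)[of 0 i] D(3)[of i 0] z p0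
          by (auto simp: star_arc_def)
        then show "\<phi> i \<in> Ou" using V[of i] i unfolding Ou_def by auto
      qed
      show "inj_on (restrict \<phi> {1..k}) {1..k}"
        using D(2) by (auto simp: inj_on_def)
    qed
    moreover have "restrict \<phi> {k+1..k+l} \<in> SI"
      unfolding SI_def
    proof (intro CollectI conjI)
      show "restrict \<phi> {k+1..k+l} \<in> {k+1..k+l} \<rightarrow>\<^sub>E Iu"
      proof (rule restrict_PiE_iff[THEN iffD2], intro ballI)
        fix i assume i: "i \<in> {k+1..k+l}"
        then have "A (\<phi> i) x" "\<not> A x (\<phi> i)" using D(3)[of 0 i] D(3)[of i 0] z p0
          by (auto simp: star_arc_def)
        then show "\<phi> i \<in> Iu" using V[of i] i unfolding Iu_def by auto
      qed
      show "inj_on (restrict \<phi> {k+1..k+l}) {k+1..k+l}"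
        using D(2) by (auto simp: inj_on_def)
    qed
    ultimately show "r \<in> SO \<times> SI" using r unfolding R_def by auto
  qed
  have cSO: "card SO = (\<Prod>i\<in>{0..<k}. card Ou - i)"
    unfolding SO_def using card_inj_on_subset_funcset[of "{1..k}" Ou "{1..k}"] finO by simp
  have cSI: "card SI = (\<Prod>i\<in>{0..<l}. card Iu - i)"
    unfolding SI_def using card_inj_on_subset_funcset[of "{k+1..k+l}" Iu "{k+1..k+l}"] finO by simp
  have finS: "finite SO" "finite SI" unfolding SO_def SI_def using finO
    by (auto intro!: finite_PiE)
  have "card Z = card (R ` Z)" using inj by (simp add: card_image)
  also have "\<dots> \<le> card (SO \<times> SI)" using img finS by (intro card_mono) auto
  also have "\<dots> = (\<Prod>i\<in>{0..<k}. card Ou - i) * (\<Prod>i\<in>{0..<l}. card Iu - i)"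
    using cSO cSI by (simp add: card_cartesian_product)
  finally have "real (card Z) \<le> real ((\<Prod>i\<in>{0..<k}. card Ou - i) * (\<Prod>i\<in>{0..<l}. card Iu - i))"
    by linarith
  also have "\<dots> \<le> (real k^k * real l^l / real (k+l)^(k+l)) * (max 0 (real (card Ou) + real (card Iu) - (real (k+l) - 2)/2))^(k+l)"
    by (rule centre_bound[OF kl])
  also have "\<dots> \<le> (real k^k * real l^l / real (k+l)^(k+l)) * (max 0 (real (card (nbr V A x)) - (real (k+l) - 2)/2))^(k+l)"
  proof -
    have "card Ou + card Iu = card (Ou \<union> Iu)" using finO by (intro card_Un_disjoint[symmetric]) (auto simp: Ou_def Iu_def)
    also have "\<dots> \<le> card (nbr V A x)" using fin by (intro card_mono) (auto simp: Ou_def Iu_def nbr_def)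
    finally have "real (card Ou) + real (card Iu) \<le> real (card (nbr V A x))" by linarith
    then show ?thesis by (intro mult_left_mono power_mono) auto
  qed
  finally show ?thesis unfolding Z_def .
qed

lemma num_bound:
  assumes fin: "finite V" and kl: "k > 0" "l > 0"
  shows "real (card {\<phi> \<in> star_maps k l V A. x \<in> \<phi> ` {0..k+l}}) \<le>
    (real k^k * real l^l / real (k+l)^(k+l)) * (max 0 (real (card (nbr V A x)) - (real (k+l) - 2)/2))^(k+l)
    + real (card (nbr V A x)) * (real k * (real (k-1)^(k-1) * real l^l / real (k+l-1)^(k+l-1))
        + real l * (real k^k * real (l-1)^(l-1) / real (k+l-1)^(k+l-1))) * real (card (wset V A x))^(k+l-1)"
proof -
  let ?Z = "\<lambda>j. {\<phi> \<in> star_maps k l V A. \<phi> j = x}"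
  let ?d = "real (card (nbr V A x))" and ?w = "real (card (wset V A x))"
  have finSM: "finite (star_maps k l V A)"
  proof -
    have "finite (all_maps k l V)" using fin unfolding all_maps_def by (intro finite_PiE) auto
    then show ?thesis unfolding star_maps_def by simp
  qed
  have "{\<phi> \<in> star_maps k l V A. x \<in> \<phi> ` {0..k+l}} \<subseteq> (\<Union>j\<in>{0..k+l}. ?Z j)" by auto
  hence "card {\<phi> \<in> star_maps k l V A. x \<in> \<phi> ` {0..k+l}} \<le> card (\<Union>j\<in>{0..k+l}. ?Z j)"
    using finSM by (intro card_mono) auto
  also have "\<dots> \<le> (\<Sum>j\<in>{0..k+l}. card (?Z j))" by (rule card_UN_le) simp
  finally have 1: "real (card {\<phi> \<in> star_maps k l V A. x \<in> \<phi> ` {0..k+l}}) \<le> (\<Sum>j\<in>{0..k+l}. real (card (?Z j)))"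
    using of_nat_mono by fastforce
  have sp: "{0..k+l} = insert 0 ({1..k} \<union> {k+1..k+l})" by auto
  have 2: "(\<Sum>j\<in>{0..k+l}. real (card (?Z j))) = real (card (?Z 0)) + (\<Sum>j\<in>{1..k}. real (card (?Z j)))
      + (\<Sum>j\<in>{k+1..k+l}. real (card (?Z j)))"
    unfolding sp by (subst sum.insert) (auto simp: sum.union_disjoint)
  have 3: "(\<Sum>j\<in>{1..k}. real (card (?Z j))) \<le> (\<Sum>j\<in>{1..k}. ?d * (real (k-1)^(k-1) * real l^l / real (k+l-1)^(k+l-1)) * ?w^(k+l-1))"
  proof (intro sum_mono)
    fix j assume j: "j \<in> {1..k}"
    have e: "k - 1 + l = k + l - 1" using kl by simp
    show "real (card (?Z j)) \<le> ?d * (real (k-1)^(k-1) * real l^l / real (k+l-1)^(k+l-1)) * ?w^(k+l-1)"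
      using leaf_card[OF fin, of j k l "k-1" l A x] j kl unfolding e by auto
  qed
  have 4: "(\<Sum>j\<in>{k+1..k+l}. real (card (?Z j))) \<le> (\<Sum>j\<in>{k+1..k+l}. ?d * (real k^k * real (l-1)^(l-1) / real (k+l-1)^(k+l-1)) * ?w^(k+l-1))"
  proof (intro sum_mono)
    fix j assume j: "j \<in> {k+1..k+l}"
    have e: "k + (l - 1) = k + l - 1" using kl by simp
    show "real (card (?Z j)) \<le> ?d * (real k^k * real (l-1)^(l-1) / real (k+l-1)^(k+l-1)) * ?w^(k+l-1)"
      using leaf_card[OF fin, of j k l k "l-1" A x] j kl unfolding e by auto
  qed
  have 5: "real (card (?Z 0)) \<le> (real k^k * real l^l / real (k+l)^(k+l)) * (max 0 (?d - (real (k+l) - 2)/2))^(k+l)"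
    by (rule centre_card[OF fin kl])
  define C1 where "C1 = ?d * (real (k-1)^(k-1) * real l^l / real (k+l-1)^(k+l-1)) * ?w^(k+l-1)"
  define C2 where "C2 = ?d * (real k^k * real (l-1)^(l-1) / real (k+l-1)^(k+l-1)) * ?w^(k+l-1)"
  have h3: "(\<Sum>j\<in>{1..k}. real (card (?Z j))) \<le> real k * C1" using 3 kl unfolding C1_def by (simp add: of_nat_diff)
  have h4: "(\<Sum>j\<in>{k+1..k+l}. real (card (?Z j))) \<le> real l * C2" using 4 kl unfolding C2_def by (simp add: of_nat_diff)
  have "real (card {\<phi> \<in> star_maps k l V A. x \<in> \<phi> ` {0..k+l}}) \<le>
    (real k^k * real l^l / real (k+l)^(k+l)) * (max 0 (?d - (real (k+l) - 2)/2))^(k+l) + (real k * C1 + real l * C2)"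
    using 1 2 h3 h4 5 by linarith
  also have "real k * C1 + real l * C2 = ?d * (real k * (real (k-1)^(k-1) * real l^l / real (k+l-1)^(k+l-1))
        + real l * (real k^k * real (l-1)^(l-1) / real (k+l-1)^(k+l-1))) * ?w^(k+l-1)"
    unfolding C1_def C2_def by (simp add: algebra_simps)
  finally show ?thesis .
qed



lemma binom_diff_bound:
  fixes c h :: real and N :: nat
  assumes "c \<ge> 0" "h \<ge> 0"
  shows "(c+h)^(N+1) - (c-h)^(N+1) \<ge> real (N+1) * 2 * h * c^N"
proof -
  have e1: "(h+c)^(N+1) = (\<Sum>j\<le>N+1. real (N+1 choose j) * h^j * c^(N+1-j))" by (rule binomial_ring)
  have e2: "(-h+c)^(N+1) = (\<Sum>j\<le>N+1. real (N+1 choose j) * (-h)^j * c^(N+1-j))" by (rule binomial_ring)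
  have "(c+h)^(N+1) - (c-h)^(N+1) = (h+c)^(N+1) - (-h+c)^(N+1)" by (simp add: algebra_simps)
  also have "\<dots> = (\<Sum>j\<le>N+1. real (N+1 choose j) * h^j * c^(N+1-j)) - (\<Sum>j\<le>N+1. real (N+1 choose j) * (-h)^j * c^(N+1-j))"
    by (simp only: e1 e2)
  also have "\<dots> = (\<Sum>j\<le>N+1. real (N+1 choose j) * h^j * c^(N+1-j) - real (N+1 choose j) * (-h)^j * c^(N+1-j))"
    by (simp only: sum_subtractf)
  also have "\<dots> = (\<Sum>j\<le>N+1. real (N+1 choose j) * (h^j - (-h)^j) * c^(N+1-j))"
    by (intro sum.cong refl) (simp add: algebra_simps)
  also have "\<dots> \<ge> real (N+1 choose 1) * (h^1 - (-h)^1) * c^(N+1-1)"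
  proof (rule member_le_sum)
    fix j assume "j \<in> {..N+1} - {1}"
    have "(-h)^j \<le> h^j"
    proof -
      have "(-h)^j \<le> \<bar>(-h)^j\<bar>" by (rule abs_ge_self)
      also have "\<dots> = h^j" using assms by (simp add: power_abs)
      finally show ?thesis .
    qed
    then show "0 \<le> real (N+1 choose j) * (h^j - (-h)^j) * c^(N+1-j)"
      using assms by (intro mult_nonneg_nonneg) auto
  qed auto
  finally show ?thesis by (simp add: algebra_simps)
qed

lemma denom_card:
  assumes fin: "finite V" and x: "x \<in> V"
  shows "card {\<phi> \<in> all_maps k l V. x \<in> \<phi> ` {0..k+l}} = card V^(k+l+1) - (card V - 1)^(k+l+1)"
proof -
  let ?S = "{\<phi> \<in> all_maps k l V. x \<in> \<phi> ` {0..k+l}}"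
  have fa: "finite (all_maps k l V)" unfolding all_maps_def using fin by (intro finite_PiE) auto
  have c: "card (all_maps k l V) = card V^(k+l+1)" unfolding all_maps_def using fin
    by (simp add: card_funcsetE)
  have "all_maps k l V - ?S = PiE {0..k+l} (\<lambda>_. V - {x})"
    unfolding all_maps_def by (auto simp: PiE_iff)
  hence c2: "card (all_maps k l V - ?S) = (card V - 1)^(k+l+1)"
    using fin x by (simp add: card_funcsetE)
  have "card (all_maps k l V - ?S) = card (all_maps k l V) - card ?S"
    using fa by (intro card_Diff_subset) auto
  moreover have "card ?S \<le> card (all_maps k l V)" using fa by (intro card_mono) auto
  ultimately show ?thesis using c c2 by linarith
qed

lemma denom_real:
  assumes fin: "finite V" and x: "x \<in> V"
  shows "real (card {\<phi> \<in> all_maps k l V. x \<in> \<phi> ` {0..k+l}}) \<ge> real (k+l+1) * (real (card V) - 1/2)^(k+l)"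
proof -
  have n1: "card V \<ge> 1" using fin x by (metis card_0_eq empty_iff less_one not_le)
  have le: "(card V - 1)^(k+l+1) \<le> card V^(k+l+1)" by (intro power_mono) auto
  have "real (card {\<phi> \<in> all_maps k l V. x \<in> \<phi> ` {0..k+l}}) = real (card V)^(k+l+1) - (real (card V) - 1)^(k+l+1)"
    using denom_card[OF fin x] le n1 by (simp add: of_nat_diff)
  also have "\<dots> = ((real (card V) - 1/2) + 1/2)^(k+l+1) - ((real (card V) - 1/2) - 1/2)^(k+l+1)" by simp
  also have "\<dots> \<ge> real (k+l+1) * 2 * (1/2) * (real (card V) - 1/2)^(k+l)"
    using n1 by (intro binom_diff_bound) auto
  also have "real (k+l+1) * 2 * (1/2) * (real (card V) - 1/2)^(k+l) = real (k+l+1) * (real (card V) - 1/2)^(k+l)"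
    by simp
  finally show ?thesis .
qed

lemma wset_card:
  assumes dg: "digraph V A" and x: "x \<in> V"
  shows "card (wset V A x) = card V - card (nbr V A x) - 1" "card (nbr V A x) + 1 \<le> card V"
proof -
  have fin: "finite V" using dg by (simp add: digraph_def)
  have xn: "x \<notin> nbr V A x" using dg by (simp add: digraph_def nbr_def)
  have sub: "insert x (nbr V A x) \<subseteq> V" using x by (auto simp: nbr_def)
  have "wset V A x = V - insert x (nbr V A x)" by (auto simp: wset_def)
  hence "card (wset V A x) = card V - card (insert x (nbr V A x))"
    using card_Diff_subset[of "insert x (nbr V A x)" V] fin sub by (auto intro: finite_subset)
  also have "card (insert x (nbr V A x)) = card (nbr V A x) + 1"
    using xn fin by (simp add: nbr_def)
  finally show "card (wset V A x) = card V - card (nbr V A x) - 1" by simp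
  show "card (nbr V A x) + 1 \<le> card V"
    using card_mono[OF fin sub] xn fin by (simp add: nbr_def)
qed



lemma c_eq_kk: fixes k l :: nat assumes True: "k = l" and kl: "l \<ge> 1"
  shows "real k^k * real l^l / real (k+l)^(k+l) = 1 / 2^(2*k)"
proof -
  have a: "real (k+l) = 2 * real k" using True by simp
  have b: "k + l = 2*k" using True by simp
  have "real (k+l)^(k+l) = (2*real k)^(2*k)" by (subst a, subst b, rule refl)
  also have "\<dots> = 2^(2*k) * real k^(2*k)" by (rule power_mult_distrib)
  also have "real k^(2*k) = real k^k * real k^k" by (simp only: mult_2 power_add)
  finally have e: "real (k+l)^(k+l) = 2^(2*k) * (real k^k * real l^l)" using True by simp
  have kp: "real k^k * real l^l > 0" using kl True by simp
  have gen: "\<And>X Y::real. X > 0 \<Longrightarrow> X/(Y*X) = 1/Y"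
    by (metis div_by_1 divide_divide_eq_left' divide_self_if less_irrefl)
  show ?thesis unfolding e using kp by (rule gen)
qed

lemma OPT_lower:
  assumes kl: "k \<ge> l" "l \<ge> 1"
  shows "OPT k l \<ge> (real k^k * real l^l / real (k+l)^(k+l)) * (real (k+l)/(real (k+l)+1))^(k+l) / (real (k+l) + 1)"
proof -
  define m where "m = k + l"
  define a0 :: real where "a0 = 1/(real m + 1)"
  have mpos: "real m > 0" using kl by (simp add: m_def)
  have a0: "0 \<le> a0" "a0 \<le> 1/2" "1 - a0 = real m/(real m+1)" using mpos kl
    by (auto simp: a0_def m_def field_simps)
  show ?thesis
  proof (cases "k = l")
    case True
    define f where "f = (\<lambda>\<alpha>::real. \<alpha> * (1-\<alpha>)^(2*k) + (1-\<alpha>) * \<alpha>^(2*k))"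
    have opt: "OPT k l = (1 / 2 ^ (2*k)) * Sup (f ` {0..1})"
      unfolding OPT_def f_def using True by (simp add: Let_def)
    have bdd: "bdd_above (f ` {0..1})"
    proof (rule bdd_aboveI2)
      fix \<alpha> :: real assume "\<alpha> \<in> {0..1}"
      then have "\<alpha> * (1-\<alpha>)^(2*k) \<le> 1" "(1-\<alpha>) * \<alpha>^(2*k) \<le> 1"
        by (simp_all add: mult_le_one power_le_one)
      then show "f \<alpha> \<le> 2" unfolding f_def by linarith
    qed
    have "f a0 \<le> Sup (f ` {0..1})" using bdd a0 by (intro cSup_upper) auto
    moreover have "a0 * (1-a0)^(2*k) \<le> f a0" unfolding f_def using a0 by simp
    ultimately have 1: "a0 * (1-a0)^(2*k) \<le> Sup (f ` {0..1})" by linarith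
    have m2: "m = 2*k" using True by (simp add: m_def)
    have hc: "(real k^k * real l^l / real (k+l)^(k+l)) = 1 / 2^(2*k)"
      using c_eq_kk[OF True kl(2)] .
    have h1: "1 - a0 = real (k+l)/(real (k+l)+1)" using a0(3) unfolding m_def .
    have h2: "2*k = k+l" using True by simp
    have p1: "(1-a0)^(2*k) = (real (k+l)/(real (k+l)+1))^(k+l)" by (simp only: h1 h2)
    have p2: "a0 = 1/(real (k+l)+1)" unfolding a0_def m_def ..
    have "(real k^k * real l^l / real (k+l)^(k+l)) * (real (k+l)/(real (k+l)+1))^(k+l) / (real (k+l) + 1)
        = (1 / 2^(2*k)) * (a0 * (1-a0)^(2*k))"
      unfolding hc p1 by (simp add: p2)
    also have "\<dots> \<le> (1 / 2^(2*k)) * Sup (f ` {0..1})" using 1 by (intro mult_left_mono) auto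
    finally show ?thesis using opt by simp
  next
    case False
    define C :: real where "C = real (k-1) ^ (k-1) * real l ^ l / real (m-1) ^ (m-1)"
    define g where "g = (\<lambda>(\<alpha>::real, d::real). \<alpha> * (1-\<alpha>)^m * d^k * (1-d)^l + C * (1-\<alpha>) * \<alpha>^m * (1-d))"
    have opt: "OPT k l = Sup (g ` ({0..1/2} \<times> {0..real k / real m}))"
      unfolding OPT_def g_def C_def m_def using False by (simp add: Let_def)
    have C0: "C \<ge> 0" unfolding C_def by simp
    have km: "real k / real m \<le> 1" using mpos by (simp add: m_def)
    have bdd: "bdd_above (g ` ({0..1/2} \<times> {0..real k / real m}))"
    proof (rule bdd_aboveI2)
      fix p :: "real \<times> real" assume p: "p \<in> {0..1/2} \<times> {0..real k / real m}"
      obtain \<alpha> d where pe: "p = (\<alpha>, d)" by (cases p)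
      have r: "0 \<le> \<alpha>" "\<alpha> \<le> 1" "0 \<le> d" "d \<le> 1" using p km pe by auto
      have "\<alpha> * (1-\<alpha>)^m * d^k * (1-d)^l \<le> 1" using r
        by (simp add: mult_le_one power_le_one)
      moreover have "(1-\<alpha>) * \<alpha>^m * (1-d) \<le> 1" using r
        by (simp add: mult_le_one power_le_one)
      hence "C * ((1-\<alpha>) * \<alpha>^m * (1-d)) \<le> C" using C0 by (simp add: mult_left_le)
      ultimately show "g p \<le> 1 + C" unfolding g_def pe by (simp add: mult.assoc)
    qed
    have pin: "(a0, real k / real m) \<in> {0..1/2} \<times> {0..real k / real m}" using a0 by simp
    have "g (a0, real k / real m) \<le> Sup (g ` ({0..1/2} \<times> {0..real k / real m}))"
      using bdd pin by (intro cSup_upper) auto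
    moreover have "a0 * (1-a0)^m * (real k / real m)^k * (1 - real k / real m)^l \<le> g (a0, real k / real m)"
      unfolding g_def using a0 C0 km by (simp add: mult_nonneg_nonneg)
    moreover have "1 - real k / real m = real l / real m" using mpos by (simp add: m_def field_simps)
    moreover have "a0 * (1-a0)^m * (real k / real m)^k * (real l / real m)^l =
      (real k^k * real l^l / real (k+l)^(k+l)) * (real (k+l)/(real (k+l)+1))^(k+l) / (real (k+l) + 1)"
    proof -
      have e1: "(real k/real m)^k*(real l/real m)^l = real k^k*real l^l/real m^m"
        by (simp add: power_divide m_def power_add)
      have "a0 * (1-a0)^m * (real k / real m)^k * (real l / real m)^l = (a0*(1-a0)^m) * ((real k/real m)^k*(real l/real m)^l)"
        by (simp add: mult.assoc)
      also have "\<dots> = (1/(real m+1)) * (real m/(real m+1))^m * (real k^k*real l^l/real m^m)"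
        unfolding e1 a0(3) by (simp add: a0_def)
      finally show ?thesis unfolding m_def by (simp add: mult_ac)
    qed
    ultimately show ?thesis using opt by (simp add: m_def)
  qed
qed



lemma K_bound:
  assumes kl: "k \<ge> l" "l \<ge> 1" "k + l \<ge> 6"
  shows "real k * (real (k-1)^(k-1) * real l^l / real (k+l-1)^(k+l-1))
        + real l * (real k^k * real (l-1)^(l-1) / real (k+l-1)^(k+l-1))
      \<le> 16/10 * real (k+l)^(k+l) / real (k+l-1)^(k+l-1) * (real k^k * real l^l / real (k+l)^(k+l))"
proof -
  have k3: "k \<ge> 3" using kl by linarith
  have kpos: "real k > 0" using k3 by simp
  have "(1 - 1/real k)^(k-1) \<le> 1/(1 + real (k-1) * (1/real k))"
    using kpos k3 by (intro one_minus_pow_le) auto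
  also have "1 + real (k-1) * (1/real k) = (2*real k - 1)/real k" using kpos k3
    by (simp add: field_simps of_nat_diff)
  also have "1/((2*real k - 1)/real k) \<le> 3/5" using k3 kpos by (simp add: field_simps)
  finally have a: "(1 - 1/real k)^(k-1) \<le> 3/5" .
  have A1: "real (k-1)^(k-1) \<le> real k^(k-1) * (3/5)"
  proof -
    have "real (k-1)^(k-1) = real k^(k-1) * (1 - 1/real k)^(k-1)"
      using kpos k3 by (simp add: power_mult_distrib[symmetric] field_simps of_nat_diff)
    also have "\<dots> \<le> real k^(k-1) * (3/5)" using a by (intro mult_left_mono) auto
    finally show ?thesis .
  qed
  define y where "y = real (k-1)^(k-1)"
  have A2: "real k * real k^(k-1) = real k^k" using k3 by (cases k) auto
  have "real k * y \<le> real k * (real k^(k-1) * (3/5))" using A1 kpos unfolding y_def by (intro mult_left_mono) auto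
  also have "\<dots> = 3/5 * (real k * real k^(k-1))" by simp
  finally have A: "real k * real (k-1)^(k-1) \<le> 3/5 * real k^k" using A2 unfolding y_def by simp
  have "real (l-1)^(l-1) \<le> real l^(l-1)" by (intro power_mono) auto
  hence "real l * real (l-1)^(l-1) \<le> real l * real l^(l-1)" by (intro mult_left_mono) auto
  also have "real l * real l^(l-1) = real l^l" using kl by (cases l) auto
  finally have B: "real l * real (l-1)^(l-1) \<le> real l^l" .
  have "real k * real (k-1)^(k-1) * real l^l + real l * real (l-1)^(l-1) * real k^k
      \<le> 3/5 * real k^k * real l^l + real l^l * real k^k"
    using A B by (intro add_mono mult_right_mono) auto
  also have "\<dots> \<le> 16/10 * (real k^k * real l^l)" by simp
  finally have main: "real k * real (k-1)^(k-1) * real l^l + real l * real (l-1)^(l-1) * real k^k \<le> 16/10 * (real k^k * real l^l)" .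
  have pm: "real (k+l)^(k+l) > 0" "real (k+l-1)^(k+l-1) > 0" using kl by auto
  have gen: "\<And>a X D D1 :: real. D > 0 \<Longrightarrow> D1 > 0 \<Longrightarrow> a \<le> 16/10*X \<Longrightarrow> a/D1 \<le> 16/10*D/D1*(X/D)"
  proof -
    fix a X D D1 :: real assume h: "D > 0" "D1 > 0" "a \<le> 16/10*X"
    have "a/D1 \<le> (16/10*X)/D1" using h by (intro divide_right_mono) auto
    also have "\<dots> = 16/10*D/D1*(X/D)" using h by (simp add: field_simps)
    finally show "a/D1 \<le> 16/10*D/D1*(X/D)" .
  qed
  have "real k * (real (k-1)^(k-1) * real l^l / real (k+l-1)^(k+l-1))
        + real l * (real k^k * real (l-1)^(l-1) / real (k+l-1)^(k+l-1))
       = (real k * real (k-1)^(k-1) * real l^l + real l * real (l-1)^(l-1) * real k^k) / real (k+l-1)^(k+l-1)"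
    by (simp add: add_divide_distrib mult_ac)
  also have "\<dots> \<le> 16/10 * real (k+l)^(k+l) / real (k+l-1)^(k+l-1) * (real k^k * real l^l / real (k+l)^(k+l))"
    by (rule gen[OF pm(1) pm(2) main])
  finally show ?thesis .
qed



lemma key:
  fixes k l :: nat and V :: "'a set" and A :: "'a \<Rightarrow> 'a \<Rightarrow> bool"
  assumes kl: "k \<ge> l" "l \<ge> 1" "k + l \<ge> 6" and dg: "digraph V A" and x: "x \<in> V"
    and s: "s_val k l V A x \<ge> OPT k l" and r: "rho V A x \<ge> 1/2"
  shows "rho V A x \<ge> (1 - 1 / real (k+l) ^ 3) * (real (k+l) / (real (k+l) + 1))"
proof (rule ccontr)
  define T where "T = (1 - 1 / real (k+l) ^ 3) * (real (k+l) / (real (k+l) + 1))"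
  assume "\<not> rho V A x \<ge> (1 - 1 / real (k+l) ^ 3) * (real (k+l) / (real (k+l) + 1))"
  hence rT: "rho V A x < T" unfolding T_def by simp
  have fin: "finite V" using dg by (simp add: digraph_def)
  define n where "n = card V"
  define d where "d = card (nbr V A x)"
  define wc where "wc = card (wset V A x)"
  have nd: "d + 1 \<le> n" and wce: "wc = n - d - 1" using wset_card[OF dg x] by (auto simp: n_def d_def wc_def)
  have rho_eq: "rho V A x = real d / real n" by (simp add: rho_def d_def n_def nbr_def)
  have npos: "real n > 0" using nd by simp
  define h where "h = real n - 1/2"
  have hpos: "h > 0" using nd unfolding h_def by simp
  define c where "c = real k^k * real l^l / real (k+l)^(k+l)"
  define Q where "Q = (real (k+l)/(real (k+l)+1))^(k+l)"
  define CL where "CL = real k * (real (k-1)^(k-1) * real l^l / real (k+l-1)^(k+l-1))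
        + real l * (real k^k * real (l-1)^(l-1) / real (k+l-1)^(k+l-1))"
  define U0 where "U0 = max 0 (real d - (real (k+l) - 2)/2)"
  define N where "N = real (card {\<phi> \<in> star_maps k l V A. x \<in> \<phi> ` {0..k+l}})"
  define M where "M = real (card {\<phi> \<in> all_maps k l V. x \<in> \<phi> ` {0..k+l}})"
  have cpos: "c > 0" unfolding c_def using kl by simp
  have Qpos: "Q > 0" unfolding Q_def using kl by simp
  have CL0: "CL \<ge> 0" unfolding CL_def by simp
  have Mlow: "M \<ge> real (k+l+1) * h^(k+l)" unfolding M_def h_def n_def by (rule denom_real[OF fin x])
  have "real (k+l+1) * h^(k+l) > 0" using hpos by simp
  hence Mpos: "M > 0" using Mlow by linarith
  have Optl: "OPT k l \<ge> c * Q / (real (k+l) + 1)" using OPT_lower[OF kl(1,2)] unfolding c_def Q_def by simp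
  have "N / M \<ge> OPT k l" using s unfolding s_val_def N_def M_def by simp
  hence NM: "N \<ge> OPT k l * M" using Mpos by (simp add: pos_le_divide_eq)
  have pp: "real (k+l) + 1 > 0" by simp
  have "c * Q / (real (k+l) + 1) * (real (k+l+1) * h^(k+l)) = c * Q * h^(k+l)" using pp by (simp add: field_simps)
  moreover have "c * Q / (real (k+l) + 1) * (real (k+l+1) * h^(k+l)) \<le> OPT k l * M"
  proof -
    have "c * Q / (real (k+l) + 1) > 0" using cpos Qpos pp by simp
    hence "OPT k l \<ge> 0" using Optl by linarith
    then show ?thesis using Optl Mlow cpos Qpos hpos pp by (intro mult_mono) auto
  qed
  ultimately have Nlow: "N \<ge> c * Q * h^(k+l)" using NM by linarith
  have Nup: "N \<le> c * U0^(k+l) + real d * CL * real wc^(k+l-1)"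
    using num_bound[OF fin, of k l A x] kl unfolding N_def c_def U0_def CL_def d_def wc_def by simp
  define u where "u = U0 / h"
  define w where "w = real d / h"
  define K where "K = CL / c"
  have Kb: "K \<le> 16/10 * real (k+l) ^ (k+l) / real (k+l-1)^(k+l-1)"
  proof -
    have hKB: "CL \<le> 16/10 * real (k+l) ^ (k+l) / real (k+l-1)^(k+l-1) * c"
      using K_bound[OF kl] unfolding CL_def c_def .
    show ?thesis unfolding K_def using hKB cpos by (simp add: pos_divide_le_eq)
  qed
  have K0: "0 \<le> K" unfolding K_def using CL0 cpos by simp
  have dn2: "2 * real d \<ge> real n" using r rho_eq npos by (simp add: field_simps)
  have w1: "1/2 \<le> w" unfolding w_def h_def using dn2 hpos h_def by (simp add: field_simps)
  have w2: "w \<le> 1" unfolding w_def using nd hpos h_def by (simp add: field_simps)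
  have u0: "0 \<le> u" unfolding u_def U0_def using hpos by simp
  have uw: "u \<le> w" unfolding u_def w_def U0_def using hpos kl by (intro divide_right_mono) auto
  have m6: "real (k+l) \<ge> 6" using kl by simp
  have "real (k+l)^3 \<ge> 6^3" using m6 by (intro power_mono) auto
  hence m3: "1 / real (k+l)^3 < 1" by (subst divide_less_eq_1) auto
  have Tpos: "T > 0" unfolding T_def using m3 m6 by (intro mult_pos_pos) auto
  have T1: "T \<le> 1" unfolding T_def using kl by (intro mult_le_one) (auto simp: field_simps)
  have dT: "real d < T * real n" using rT rho_eq npos by (simp add: field_simps)
  have U0T: "U0 < T * h"
  proof -
    have "real d - (real (k+l) - 2)/2 < T * h"
    proof -
      have "real (k+l) \<ge> 6" using kl by simp
      hence "T / 2 \<le> (real (k+l) - 2)/2" using T1 by simp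
      moreover have "T*h = T*real n - T/2" unfolding h_def by (simp add: algebra_simps)
      ultimately show ?thesis using dT by linarith
    qed
    moreover have "0 < T * h" using Tpos hpos by simp
    ultimately show ?thesis unfolding U0_def by simp
  qed
  have uT: "u < (1 - 1/real (k+l)^3) * (real (k+l)/(real (k+l)+1))"
    using U0T hpos unfolding u_def T_def by (simp add: pos_divide_less_eq mult.commute)
  have ana: "u^(k+l) + K*w*(1-w)^(k+l-1) < Q"
    unfolding Q_def using analytic[OF kl(3) K0 Kb w1 w2 u0 uw uT] .
  have m1: "k + l = Suc (k+l-1)" using kl by simp
  have wc_le: "real wc \<le> h - real d" using wce nd unfolding h_def by (simp add: of_nat_diff)
  have "real d * CL * real wc^(k+l-1) \<le> real d * CL * (h - real d)^(k+l-1)"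
    using wc_le CL0 by (intro mult_left_mono power_mono) auto
  hence "N \<le> c * U0^(k+l) + real d * CL * (h - real d)^(k+l-1)" using Nup by linarith
  also have "\<dots> = c * h^(k+l) * (u^(k+l) + K*w*(1-w)^(k+l-1))"
  proof -
    have a: "c * h^(k+l) * u^(k+l) = c * U0^(k+l)" unfolding u_def using hpos by (simp add: power_divide)
    have "h * (1-w) = h - real d" unfolding w_def using hpos by (simp add: field_simps)
    hence b1: "(h*(1-w))^(k+l-1) = (h - real d)^(k+l-1)" by simp
    have hs: "h^(k+l) = h * h^(k+l-1)" using m1 by (metis power_Suc)
    have cK: "c*K = CL" unfolding K_def using cpos by simp
    have "c * h^(k+l) * (K*w*(1-w)^(k+l-1)) = (c*K) * (h*w) * (h^(k+l-1)*(1-w)^(k+l-1))"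
      unfolding hs by (simp add: mult_ac)
    also have "\<dots> = CL * (h * w) * (h*(1-w))^(k+l-1)" by (simp only: cK power_mult_distrib)
    also have "h * w = real d" unfolding w_def using hpos by simp
    finally have b: "c * h^(k+l) * (K*w*(1-w)^(k+l-1)) = real d * CL * (h - real d)^(k+l-1)"
      using b1 by simp
    show ?thesis unfolding distrib_left a b ..
  qed
  also have "\<dots> < c * h^(k+l) * Q" using ana cpos hpos by (intro mult_strict_left_mono) auto
  finally show False using Nlow by (simp add: mult_ac)
qed


theorem claimA3:
  fixes k l :: nat and V :: "'a set" and A :: "'a \<Rightarrow> 'a \<Rightarrow> bool"
  assumes "k \<ge> l" "l \<ge> 1" "k + l \<ge> 6"
    and "digraph V A"
    and "\<forall>v\<in>V. s_val k l V A v \<ge> OPT k l"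
    and "Xset V A \<noteq> {}"
  shows "Dval V A \<ge> (1 - 1 / real (k+l) ^ 3) * (real (k+l) / (real (k+l) + 1))"
proof -
  have fin: "finite V" using assms(4) by (simp add: digraph_def)
  have Xfin: "finite (Xset V A)" using fin by (simp add: Xset_def)
  have "Min (rho V A ` Xset V A) \<in> rho V A ` Xset V A"
    using Xfin assms(6) by (intro Min_in) auto
  then obtain x where xX: "x \<in> Xset V A" and D: "Dval V A = rho V A x"
    unfolding Dval_def by auto
  have xV: "x \<in> V" and r: "rho V A x \<ge> 1/2" using xX by (auto simp: Xset_def)
  show ?thesis unfolding D
    using key[OF assms(1-4) xV _ r] assms(5) xV by blast
qed

end
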